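(* Let $n\ge2$. An algebra has a strong $n$-cube term if and only if it has a Mal'cev term.
   Context: A Mal'cev term is a ternary term $q$ such that $q(x,x,y)\approx y\approx q(y,x,x)$ holds. For $k\ge0$, $k_{(i)}$ denotes the $i$-th binary digit of $k$ (least significant is $i=0$). For $i<n$ let $\rho_i\colon\{0,\dots,2^n-1\}\to\{0,\dots,2^n-1\}$ map $k$ to the number obtained from $k$ by setting its $i$-th binary digit to $0$. A strong $n$-cube term is a $(2^n-1)$-ary term $q_n$ such that, for each $i<n$, the algebra satisfies the identity $q_n(y_{\rho_i(0)},y_{\rho_i(1)},\dots,y_{\rho_i(2^n-2)})\approx y_{\rho_i(2^n-1)}$ (i.e. $q_n(x_0,\dots,x_{2^n-2})=x_{2^n-1}$ whenever $x_k=x_l$ for all $k,l<2^n$ differing only in the $i$-th binary digit). For $n=2$ these identities are $q_2(x,y,x)\approx y$ and $q_2(x,x,y)\approx y$. *)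

theory Defs
  imports Main
begin

datatype 'f trm = Var nat | Fun 'f "'f trm list"

fun wf_trm :: "('f \<Rightarrow> nat) \<Rightarrow> nat \<Rightarrow> 'f trm \<Rightarrow> bool" where
  "wf_trm ar k (Var i) = (i < k)"
| "wf_trm ar k (Fun f ts) = (length ts = ar f \<and> (\<forall>t\<in>set ts. wf_trm ar k t))"

fun eval_trm :: "('f \<Rightarrow> 'a list \<Rightarrow> 'a) \<Rightarrow> 'f trm \<Rightarrow> (nat \<Rightarrow> 'a) \<Rightarrow> 'a" where
  "eval_trm F (Var i) e = e i"
| "eval_trm F (Fun f ts) e = F f (map (\<lambda>t. eval_trm F t e) ts)"

definition algebra :: "'a set \<Rightarrow> ('f \<Rightarrow> nat) \<Rightarrow> ('f \<Rightarrow> 'a list \<Rightarrow> 'a) \<Rightarrow> bool" where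
  "algebra A ar F \<longleftrightarrow> (\<forall>f xs. length xs = ar f \<and> set xs \<subseteq> A \<longrightarrow> F f xs \<in> A)"

definition has_malcev_term :: "'a set \<Rightarrow> ('f \<Rightarrow> nat) \<Rightarrow> ('f \<Rightarrow> 'a list \<Rightarrow> 'a) \<Rightarrow> bool" where
  "has_malcev_term A ar F \<longleftrightarrow>
     (\<exists>q. wf_trm ar 3 q \<and>
          (\<forall>x\<in>A. \<forall>y\<in>A. eval_trm F q (nth [x, x, y]) = y \<and> eval_trm F q (nth [y, x, x]) = y))"

definition rho :: "nat \<Rightarrow> nat \<Rightarrow> nat" where
  "rho i k = unset_bit i k"

definition has_strong_cube_term ::
  "nat \<Rightarrow> 'a set \<Rightarrow> ('f \<Rightarrow> nat) \<Rightarrow> ('f \<Rightarrow> 'a list \<Rightarrow> 'a) \<Rightarrow> bool" where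
  "has_strong_cube_term n A ar F \<longleftrightarrow>
     (\<exists>q. wf_trm ar (2^n - 1) q \<and>
          (\<forall>i<n. \<forall>y. (\<forall>k<2^n. y k \<in> A) \<longrightarrow>
              eval_trm F q (\<lambda>k. y (rho i k)) = y (rho i (2^n - 1))))"

end

theory Submission
  imports Defs
begin

fun subst :: "(nat \<Rightarrow> 'f trm) \<Rightarrow> 'f trm \<Rightarrow> 'f trm" where
  "subst s (Var i) = s i"
| "subst s (Fun f ts) = Fun f (map (subst s) ts)"

lemma eval_subst: "eval_trm F (subst s t) e = eval_trm F t (\<lambda>k. eval_trm F (s k) e)"
  by (induction t) (simp_all add: comp_def cong: map_cong)

lemma wf_subst: "wf_trm ar m t \<Longrightarrow> (\<forall>i<m. wf_trm ar m' (s i)) \<Longrightarrow> wf_trm ar m' (subst s t)"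
  by (induction t) auto

lemma eval_cong: "wf_trm ar m t \<Longrightarrow> (\<forall>i<m. e i = e' i) \<Longrightarrow> eval_trm F t e = eval_trm F t e'"
  by (induction t) (simp_all cong: map_cong)

lemma eval_closed: "algebra A ar F \<Longrightarrow> wf_trm ar m t \<Longrightarrow> (\<forall>i<m. e i \<in> A) \<Longrightarrow> eval_trm F t e \<in> A"
proof (induction t)
  case (Var x) then show ?case by simp
next
  case (Fun f ts)
  have "set (map (\<lambda>t. eval_trm F t e) ts) \<subseteq> A" using Fun by auto
  then show ?case using Fun.prems unfolding algebra_def by auto
qed

lemma ub_le: "unset_bit i (k::nat) \<le> k"
proof (induction i arbitrary: k)
  case 0 then show ?case by (simp add: unset_bit_0)
next
  case (Suc i)
  have "unset_bit i (k div 2) \<le> k div 2" by (rule Suc)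
  then show ?case by (simp add: unset_bit_Suc) (metis add_le_mono le_refl mult_le_mono2 mod_mult_div_eq add.commute)
qed

lemma ub_shift: "i < j \<Longrightarrow> unset_bit i ((k::nat) + 2^j) = unset_bit i k + 2^j"
proof (induction i arbitrary: k j)
  case 0
  then obtain j' where j: "j = Suc j'" by (cases j) auto
  show ?case by (simp add: unset_bit_0 j)
next
  case (Suc i)
  then obtain j' where j: "j = Suc j'" by (cases j) auto
  have "(k + 2^j) mod 2 = k mod 2" "(k + 2^j) div 2 = k div 2 + 2^j'" using j by auto
  moreover have "unset_bit i (k div 2 + 2^j') = unset_bit i (k div 2) + 2^j'"
    using Suc j by auto
  ultimately show ?case by (simp add: unset_bit_Suc j add.commute)
qed

lemma ub_top: "(k::nat) < 2^j \<Longrightarrow> unset_bit j (k + 2^j) = k \<and> unset_bit j k = k"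
proof (induction j arbitrary: k)
  case 0 then show ?case by (simp add: unset_bit_0)
next
  case (Suc j)
  have "k div 2 < 2^j" using Suc.prems by auto
  then have "unset_bit j (k div 2 + 2^j) = k div 2 \<and> unset_bit j (k div 2) = k div 2" by (rule Suc.IH)
  moreover have "(k + 2^Suc j) mod 2 = k mod 2" "(k + 2^Suc j) div 2 = k div 2 + 2^j" by auto
  ultimately show ?case by (simp add: unset_bit_Suc add.commute)
qed

primrec cube :: "'f trm \<Rightarrow> nat \<Rightarrow> 'f trm" where
  "cube m 0 = Var 0"
| "cube m (Suc d) = subst (\<lambda>j. if j = 0 then subst (\<lambda>k. Var (k + 2^(Suc d))) (cube m d)
        else if j = 1 then cube m d else Var (2^(Suc d) - 1)) m"

lemma wf_mono: "wf_trm ar m t \<Longrightarrow> m \<le> m' \<Longrightarrow> wf_trm ar m' t"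
  by (induction t) auto

lemma cube_wf: "wf_trm ar 3 m \<Longrightarrow> wf_trm ar (2^(Suc d) - 1) (cube m d)"
proof (induction d)
  case 0 then show ?case by simp
next
  case (Suc d)
  have IH: "wf_trm ar (2^(Suc d) - 1) (cube m d)" using Suc by simp
  define H :: nat where "H = 2^Suc d"
  have H2: "2^Suc (Suc d) = 2*H" unfolding H_def by simp
  have p: "H \<ge> 2" unfolding H_def by (simp add: Suc_leI)
  have a: "wf_trm ar (2*H - 1) (subst (\<lambda>k. Var (k + H)) (cube m d))"
    by (rule wf_subst[OF IH[folded H_def]]) (use p in auto)
  have b: "wf_trm ar (2*H - 1) (cube m d)"
    by (rule wf_mono[OF IH[folded H_def]]) (use p in auto)
  show ?case unfolding cube.simps H2 H_def[symmetric]
    by (rule wf_subst[OF Suc.prems]) (use a b p in auto)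
qed

lemma cube_key:
  assumes alg: "algebra A ar F" and wfm: "wf_trm ar 3 m"
    and mal: "\<forall>x\<in>A. \<forall>y\<in>A. eval_trm F m (nth [x, x, y]) = y \<and> eval_trm F m (nth [y, x, x]) = y"
  shows "i < Suc d \<Longrightarrow> (\<forall>k<2^Suc d. y k \<in> A) \<Longrightarrow>
     eval_trm F (cube m d) (\<lambda>k. y (rho i k)) = y (rho i (2^Suc d - 1))"
proof (induction d arbitrary: i y)
  case 0 then show ?case by (simp add: rho_def unset_bit_0)
next
  case (Suc d)
  define H :: nat where "H = 2^Suc d"
  have H2: "2^Suc (Suc d) = 2*H" unfolding H_def by simp
  have p: "H \<ge> 2" unfolding H_def by (simp add: Suc_leI)
  have wfc: "wf_trm ar (H - 1) (cube m d)" using cube_wf[OF wfm] H_def by simp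
  define env where "env = (\<lambda>k. y (rho i k))"
  define a where "a = eval_trm F (cube m d) (\<lambda>k. env (k + H))"
  define b where "b = eval_trm F (cube m d) env"
  define c where "c = env (H - 1)"
  have yA: "\<And>k. k < 2*H \<Longrightarrow> y k \<in> A" using Suc.prems H2 by auto
  have envA: "\<And>k. k < 2*H \<Longrightarrow> env k \<in> A" unfolding env_def rho_def
    using yA ub_le le_less_trans by blast
  have aA: "a \<in> A" unfolding a_def
    by (rule eval_closed[OF alg wfc]) (use envA in auto)
  have bA: "b \<in> A" unfolding b_def
    by (rule eval_closed[OF alg wfc]) (use envA p in auto)
  have cA: "c \<in> A" unfolding c_def using envA p by auto
  have ev: "eval_trm F (cube m (Suc d)) env = eval_trm F m (nth [a, b, c])"
    unfolding cube.simps eval_subst H_def[symmetric]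
    by (rule eval_cong[OF wfm]) (auto simp: a_def b_def c_def eval_subst less_Suc_eq numeral_3_eq_3)
  have target: "rho i (2^Suc (Suc d) - 1) = rho i (2*H - 1)" using H2 by simp
  show ?case
  proof (cases "i < Suc d")
    case True
    have b': "b = c" unfolding b_def c_def env_def H_def using Suc.IH[OF True] Suc.prems H2 H_def by auto
    have sh: "\<And>k. rho i (k + H) = rho i k + H" unfolding rho_def H_def by (rule ub_shift[OF True])
    have "a = eval_trm F (cube m d) (\<lambda>k. (\<lambda>k. y (k + H)) (rho i k))"
      unfolding a_def env_def sh by simp
    also have "\<dots> = y (rho i (H - 1) + H)"
      using Suc.IH[OF True, of "\<lambda>k. y (k + H)"] yA H_def by auto
    also have "rho i (H - 1) + H = rho i (2*H - 1)"
    proof -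
      have "H - 1 + H = 2*H - 1" using p by simp
      then show ?thesis using sh[of "H - 1"] by simp
    qed
    finally have a': "a = y (rho i (2*H - 1))" .
    show ?thesis unfolding env_def[symmetric] ev b' target a'[symmetric]
      using mal aA cA by auto
  next
    case False
    then have iS: "i = Suc d" using Suc.prems by simp
    have top: "\<And>k. k < H \<Longrightarrow> rho i (k + H) = k \<and> rho i k = k"
      unfolding rho_def H_def iS by (rule ub_top)
    have "a = eval_trm F (cube m d) y" unfolding a_def env_def
      by (rule eval_cong[OF wfc]) (use top in auto)
    moreover have "b = eval_trm F (cube m d) y" unfolding b_def env_def
      by (rule eval_cong[OF wfc]) (use top in auto)
    ultimately have ab: "a = b" by simp
    have e2: "2*H - 1 = (H - 1) + H" using p by simp
    have "rho i (2*H - 1) = H - 1" unfolding e2 using top[of "H - 1"] p by simp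
    moreover have "c = y (H - 1)" unfolding c_def env_def using top[of "H - 1"] p by auto
    ultimately show ?thesis unfolding env_def[symmetric] ev ab target
      using mal bA cA by auto
  qed
qed

lemma decomp4: obtains a r where "(k::nat) = 4*a + r" "r = 0 \<or> r = 1 \<or> r = 2 \<or> r = 3"
proof -
  have "k mod 4 < 4" by simp
  then have "k mod 4 = 0 \<or> k mod 4 = 1 \<or> k mod 4 = 2 \<or> k mod 4 = 3" by linarith
  moreover have "k = 4*(k div 4) + k mod 4" by simp
  ultimately show ?thesis by (rule that[rotated])
qed
lemma dm: assumes "r < (4::nat)" shows "(4*a+r) div 2 = 2*a + r div 2" "(4*a+r) mod 2 = r mod 2" "(4*a + r) div 4 = a"
  using assms by (simp_all add: div_add1_eq, presburger)
lemma A2: assumes "N = 4*(M::nat)" "M \<ge> 1" "k < N - 1" shows "(2*(k div 2) = N - 2 \<or> 2*(k div 2) = N - 1) \<longleftrightarrow> k = N - 2"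
proof -
  obtain a r where k: "k = 4*a + r" and r: "r = 0 \<or> r = 1 \<or> r = 2 \<or> r = 3" by (rule decomp4)
  have "r < 4" using r by auto
  note d = dm[OF this, of a]
  from r show ?thesis using assms unfolding k d by (auto; presburger)
qed
lemma A1: assumes "N = 4*(M::nat)" "M \<ge> 1" "k < N - 1" shows "(k mod 2 + 4*(k div 4) = N - 3 \<or> k mod 2 + 4*(k div 4) = N - 1) \<longleftrightarrow> k = N - 3"
proof -
  obtain a r where k: "k = 4*a + r" and r: "r = 0 \<or> r = 1 \<or> r = 2 \<or> r = 3" by (rule decomp4)
  have "r < 4" using r by auto
  note d = dm[OF this, of a]
  from r show ?thesis using assms unfolding k d by (auto; presburger)
qed
lemma A3: assumes "N = 4*(M::nat)" "M \<ge> 1" shows "(N - 1) mod 2 + 4*((N - 1) div 4) = N - 3 \<and> 2*((N - 1) div 2) = N - 2"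
proof -
  have "N - 1 = 4*(M - 1) + 3" using assms by simp
  then show ?thesis using assms dm[of 3 "M - 1"] by auto
qed

lemma rho01: "rho 0 (k::nat) = 2*(k div 2)" "rho 1 (k::nat) = k mod 2 + 4*(k div 4)"
  unfolding rho_def using unset_bit_Suc[of 0 k] by (simp_all add: unset_bit_0 div_mult2_eq)

lemma cube_to_malcev:
  assumes n: "n \<ge> 2" and alg: "algebra A ar F" and c: "has_strong_cube_term n A ar F"
  shows "has_malcev_term A ar F"
proof -
  obtain q where wq: "wf_trm ar (2^n - 1) q" and
    qid: "\<forall>i<n. \<forall>y. (\<forall>k<2^n. y k \<in> A) \<longrightarrow> eval_trm F q (\<lambda>k. y (rho i k)) = y (rho i (2^n - 1))"
    using c unfolding has_strong_cube_term_def by blast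
  define N :: nat where "N = 2^n"
  obtain M :: nat where NM: "N = 4*M" and M1: "M \<ge> 1"
  proof -
    have nn: "n = (n-2)+2" using n by simp
    have "(2::nat)^n = 2^(n-2) * 2^2" by (subst nn, rule power_add)
    then have "N = 4 * 2^(n-2)" unfolding N_def by simp
    then show ?thesis using that by simp
  qed
  define \<sigma> :: "nat \<Rightarrow> 'b trm" where
    "\<sigma> k = (if k = N - 2 then Var 2 else if k = N - 3 then Var 0 else Var 1)" for k
  define p where "p = subst \<sigma> q"
  have wp: "wf_trm ar 3 p" unfolding p_def
    by (rule wf_subst[OF wq]) (auto simp: \<sigma>_def)
  have "\<forall>x\<in>A. \<forall>y\<in>A. eval_trm F p (nth [x, x, y]) = y \<and> eval_trm F p (nth [y, x, x]) = y"
  proof (intro ballI conjI)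
    fix x y assume xA: "x \<in> A" and yA: "y \<in> A"
    define Y where "Y k = (if k = N - 2 \<or> k = N - 1 then y else x)" for k
    have "eval_trm F p (nth [x, x, y]) = eval_trm F q (\<lambda>k. Y (rho 0 k))"
      unfolding p_def eval_subst
    proof (rule eval_cong[OF wq], intro allI impI)
      fix k :: nat assume "k < 2^n - 1"
      then have k: "k < N - 1" unfolding N_def .
      have "(2*(k div 2) = N - 2 \<or> 2*(k div 2) = N - 1) \<longleftrightarrow> k = N - 2" using A2[OF NM M1 k] .
      moreover have "N - 2 \<noteq> N - 3" using NM M1 by linarith
      ultimately show "eval_trm F (\<sigma> k) (nth [x, x, y]) = Y (rho 0 k)"
        unfolding rho01 Y_def \<sigma>_def by auto
    qed
    also have "\<dots> = Y (rho 0 (2^n - 1))"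
    proof -
      have "\<forall>k<2^n. Y k \<in> A" using xA yA by (simp add: Y_def)
      moreover have "(0::nat) < n" using n by simp
      ultimately show ?thesis using qid by blast
    qed
    also have "\<dots> = y"
    proof -
      have "2*((N - 1) div 2) = N - 2" using A3[OF NM M1] by simp
      then show ?thesis unfolding rho01 Y_def N_def[symmetric] by simp
    qed
    finally show "eval_trm F p (nth [x, x, y]) = y" .
  next
    fix x y assume xA: "x \<in> A" and yA: "y \<in> A"
    define Y where "Y k = (if k = N - 3 \<or> k = N - 1 then y else x)" for k
    have "eval_trm F p (nth [y, x, x]) = eval_trm F q (\<lambda>k. Y (rho 1 k))"
      unfolding p_def eval_subst
    proof (rule eval_cong[OF wq], intro allI impI)
      fix k :: nat assume "k < 2^n - 1"
      then have k: "k < N - 1" unfolding N_def .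
      have "(k mod 2 + 4*(k div 4) = N - 3 \<or> k mod 2 + 4*(k div 4) = N - 1) \<longleftrightarrow> k = N - 3" using A1[OF NM M1 k] .
      moreover have "N - 2 \<noteq> N - 3" using NM M1 by linarith
      ultimately show "eval_trm F (\<sigma> k) (nth [y, x, x]) = Y (rho 1 k)"
        unfolding rho01 Y_def \<sigma>_def by auto
    qed
    also have "\<dots> = Y (rho 1 (2^n - 1))"
    proof -
      have "\<forall>k<2^n. Y k \<in> A" using xA yA by (simp add: Y_def)
      moreover have "(1::nat) < n" using n by simp
      ultimately show ?thesis using qid by blast
    qed
    also have "\<dots> = y"
    proof -
      have "(N - 1) mod 2 + 4*((N - 1) div 4) = N - 3" using A3[OF NM M1] by simp
      then show ?thesis unfolding rho01 Y_def N_def[symmetric] by simp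
    qed
    finally show "eval_trm F p (nth [y, x, x]) = y" .
  qed
  then show ?thesis unfolding has_malcev_term_def using wp by blast
qed

theorem mainTheorem8:
  fixes n :: nat and A :: "'a set" and ar :: "'f \<Rightarrow> nat" and F :: "'f \<Rightarrow> 'a list \<Rightarrow> 'a"
  assumes "n \<ge> 2" and "algebra A ar F"
  shows "has_strong_cube_term n A ar F \<longleftrightarrow> has_malcev_term A ar F"
proof
  assume "has_strong_cube_term n A ar F"
  then show "has_malcev_term A ar F" using cube_to_malcev assms by blast
next
  assume "has_malcev_term A ar F"
  then obtain m where wm: "wf_trm ar 3 m" and
    mal: "\<forall>x\<in>A. \<forall>y\<in>A. eval_trm F m (nth [x, x, y]) = y \<and> eval_trm F m (nth [y, x, x]) = y"
    unfolding has_malcev_term_def by blast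
  obtain d where d: "n = Suc d" using assms(1) by (cases n) auto
  show "has_strong_cube_term n A ar F" unfolding has_strong_cube_term_def d
    using cube_wf[OF wm, of d] cube_key[OF assms(2) wm mal] by blast
qed

end
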